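(* Let $(J,\preccurlyeq)$ be a finite upper semilattice and let $F\colon J\to \mathrm{vect}_K$ be a functor such that $\mathrm{supp}(\beta^0F)$ is bounded below in $J$ (so that its meet $\bigwedge \mathrm{supp}(\beta^0 F)$ exists). Then for every $d\geq 1$, \[ \langle \mathrm{supp}(\beta^{d+1}F)\rangle \subseteq \langle \mathrm{supp}(\beta^{d}F)\rangle, \] that is, $\cdots\subseteq\langle \mathrm{supp}(\beta^{3}F)\rangle\subseteq\langle \mathrm{supp}(\beta^{2}F)\rangle\subseteq\langle \mathrm{supp}(\beta^{1}F)\rangle$.
   Context: $K$ is a field and $\mathrm{vect}_K$ is the category of finite-dimensional $K$-vector spaces; $\mathrm{Fun}(J,\mathrm{vect}_K)$ is the abelian category of functors $J\to\mathrm{vect}_K$ with natural transformations as morphisms. For $a\in J$, $K(a,-)\colon J\to\mathrm{vect}_K$ is the functor with $K(a,b)=K$ if $a\preccurlyeq b$ and $0$ otherwise, with identity transition maps between nonzero values (free on one generator in degree $a$). Every functor $F\colon J\to\mathrm{vect}_K$ has a minimal projective resolution $\cdots\to C_1\to C_0\to F\to 0$ (each $C_d\to\ker(C_{d-1}\to C_{d-2})$ a projective cover, $C_{-1}=F$, $C_{-2}=0$), unique up to isomorphism, with $C_d\cong\bigoplus_{a\in J}K(a,-)^{\beta^dF(a)}$ for uniquely determined numbers; the function $\beta^dF\colon J\to\mathbb N$ is the $d$-th Betti diagram of $F$, and $\mathrm{supp}(\beta^dF)=\{a\in J\mid \beta^dF(a)\neq0\}$. An upper semilattice is a poset in which every nonempty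 subset has a join $\bigvee$. For $S\subseteq J$, $\langle S\rangle:=\{\bigvee T\mid T\neq\varnothing,\ T\subseteq S\}$ is the smallest subset containing $S$ closed under joins of nonempty subsets. *)

theory Defs
  imports "Jordan_Normal_Form.Matrix" "HOL-Library.Multiset"
begin

text \<open>
  Functors J -> vect_K, for a finite poset J, are encoded concretely (up to isomorphism)
  as pairs (dimension function, transition matrices): the value at a is K^(dim a) and the
  transition map a -> b (for a <= b) is the matrix M a b.
\<close>

type_synonym ('j, 'k) rep = "('j \<Rightarrow> nat) \<times> ('j \<Rightarrow> 'j \<Rightarrow> 'k mat)"

definition rdim :: "('j, 'k) rep \<Rightarrow> 'j \<Rightarrow> nat" where
  "rdim F = fst F"

definition rmap :: "('j, 'k) rep \<Rightarrow> 'j \<Rightarrow> 'j \<Rightarrow> 'k mat" where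
  "rmap F = snd F"

definition is_rep :: "('j::order, 'k::field) rep \<Rightarrow> bool" where
  "is_rep F \<longleftrightarrow>
     (\<forall>a b. a \<le> b \<longrightarrow> rmap F a b \<in> carrier_mat (rdim F b) (rdim F a)) \<and>
     (\<forall>a. rmap F a a = 1\<^sub>m (rdim F a)) \<and>
     (\<forall>a b c. a \<le> b \<longrightarrow> b \<le> c \<longrightarrow> rmap F b c * rmap F a b = rmap F a c)"

definition nat_trans :: "('j::order, 'k::field) rep \<Rightarrow> ('j, 'k) rep \<Rightarrow> ('j \<Rightarrow> 'k mat) \<Rightarrow> bool" where
  "nat_trans F G phi \<longleftrightarrow>
     (\<forall>a. phi a \<in> carrier_mat (rdim G a) (rdim F a)) \<and>
     (\<forall>a b. a \<le> b \<longrightarrow> rmap G a b * phi a = phi b * rmap F a b)"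

definition ker_at :: "('j, 'k::field) rep \<Rightarrow> ('j, 'k) rep \<Rightarrow> ('j \<Rightarrow> 'k mat) \<Rightarrow> 'j \<Rightarrow> 'k vec set" where
  "ker_at F G phi a = {v \<in> carrier_vec (rdim F a). phi a *\<^sub>v v = 0\<^sub>v (rdim G a)}"

definition im_at :: "('j, 'k::field) rep \<Rightarrow> ('j \<Rightarrow> 'k mat) \<Rightarrow> 'j \<Rightarrow> 'k vec set" where
  "im_at F phi a = (\<lambda>v. phi a *\<^sub>v v) ` carrier_vec (rdim F a)"

definition subrep :: "('j::order, 'k::field) rep \<Rightarrow> ('j \<Rightarrow> 'k vec set) \<Rightarrow> bool" where
  "subrep F N \<longleftrightarrow>
     (\<forall>a. N a \<subseteq> carrier_vec (rdim F a) \<and> 0\<^sub>v (rdim F a) \<in> N a \<and>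
          (\<forall>u\<in>N a. \<forall>w\<in>N a. u + w \<in> N a) \<and> (\<forall>c. \<forall>u\<in>N a. c \<cdot>\<^sub>v u \<in> N a)) \<and>
     (\<forall>a b. a \<le> b \<longrightarrow> (\<forall>v\<in>N a. rmap F a b *\<^sub>v v \<in> N b))"

text \<open>The kernel of phi : P => G is superfluous in P: every subfunctor N with N + ker phi = P
  is all of P. A morphism out of a projective P onto M with superfluous kernel is a
  projective cover of M.\<close>
definition superfluous_ker :: "('j::order, 'k::field) rep \<Rightarrow> ('j, 'k) rep \<Rightarrow> ('j \<Rightarrow> 'k mat) \<Rightarrow> bool" where
  "superfluous_ker P G phi \<longleftrightarrow>
     (\<forall>N. subrep P N \<and>
          (\<forall>a. {u + w | u w. u \<in> N a \<and> w \<in> ker_at P G phi a} = carrier_vec (rdim P a))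
        \<longrightarrow> (\<forall>a. N a = carrier_vec (rdim P a)))"

text \<open>The free functor on a list of generators gs: it is (isomorphic to) the direct sum of
  K(gs!i,-) over i < length gs, i.e. the sum over a of K(a,-)^(count gs a).\<close>
definition gens_le :: "'j::order list \<Rightarrow> 'j \<Rightarrow> nat list" where
  "gens_le gs x = filter (\<lambda>i. gs ! i \<le> x) [0..<length gs]"

definition free_rep :: "'j::order list \<Rightarrow> ('j, 'k::field) rep" where
  "free_rep gs =
     (\<lambda>x. length (gens_le gs x),
      \<lambda>x y. mat (length (gens_le gs y)) (length (gens_le gs x))
               (\<lambda>(r, c). if gens_le gs y ! r = gens_le gs x ! c then 1 else 0))"

text \<open>A minimal projective resolution ... -> C_2 -> C_1 -> C_0 -> F -> 0, where
  dd d : C_(d+1) => C_d and eps : C_0 => F,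
  with C_d = free_rep (gs d). Each C_d -> ker(C_(d-1) -> C_(d-2)) is a projective cover
  (C_(-1) = F, C_(-2) = 0): surjective onto that kernel (exactness) with superfluous kernel.\<close>
definition min_proj_res ::
  "('j::order, 'k::field) rep \<Rightarrow> (nat \<Rightarrow> 'j list) \<Rightarrow> ('j \<Rightarrow> 'k mat) \<Rightarrow> (nat \<Rightarrow> 'j \<Rightarrow> 'k mat) \<Rightarrow> bool"
  where
  "min_proj_res F gs eps dd \<longleftrightarrow>
     nat_trans (free_rep (gs 0)) F eps \<and>
     (\<forall>d. nat_trans (free_rep (gs (Suc d))) (free_rep (gs d)) (dd d)) \<and>
     (\<forall>a. im_at (free_rep (gs 0)) eps a = carrier_vec (rdim F a)) \<and>
     (\<forall>a. im_at (free_rep (gs 1)) (dd 0) a = ker_at (free_rep (gs 0)) F eps a) \<and>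
     (\<forall>d a. im_at (free_rep (gs (Suc (Suc d)))) (dd (Suc d)) a
             = ker_at (free_rep (gs (Suc d))) (free_rep (gs d)) (dd d) a) \<and>
     superfluous_ker (free_rep (gs 0)) F eps \<and>
     (\<forall>d. superfluous_ker (free_rep (gs (Suc d))) (free_rep (gs d)) (dd d))"

text \<open>Betti diagram: C_d is the sum over a of K(a,-)^(beta d a).\<close>
definition betti :: "(nat \<Rightarrow> 'j list) \<Rightarrow> nat \<Rightarrow> 'j \<Rightarrow> nat" where
  "betti gs d a = count (mset (gs d)) a"

definition supp :: "('j \<Rightarrow> nat) \<Rightarrow> 'j set" where
  "supp f = {a. f a \<noteq> 0}"

definition join_closure :: "'j::semilattice_sup set \<Rightarrow> 'j set" where
  "join_closure S = {Sup_fin T | T. T \<noteq> {} \<and> T \<subseteq> S}"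

end

theory Submission
  imports Defs
begin

lemma rdim_free[simp]: "rdim (free_rep gs :: ('j::order, 'k::field) rep) x = length (gens_le gs x)"
  by (simp add: rdim_def free_rep_def)

lemma rmap_free[simp]: "rmap (free_rep gs :: ('j::order, 'k::field) rep) x y =
   mat (length (gens_le gs y)) (length (gens_le gs x))
               (\<lambda>(r, c). if gens_le gs y ! r = gens_le gs x ! c then 1 else 0)"
  by (simp add: rmap_def free_rep_def)

lemma gens_distinct: "distinct (gens_le gs x)"
  by (simp add: gens_le_def)

lemma gens_set: "set (gens_le gs x) = {i. i < length gs \<and> gs ! i \<le> x}"
  by (auto simp: gens_le_def)

definition crd :: "nat list \<Rightarrow> 'k::field vec \<Rightarrow> nat \<Rightarrow> 'k" where
  "crd G v j = (\<Sum>p<length G. if G ! p = j then v $ p else 0)"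

lemma crd_nth: assumes "distinct G" "p < length G" shows "crd G v (G ! p) = v $ p"
proof -
  have "crd G v (G ! p) = (\<Sum>q<length G. if q = p then v $ q else 0)"
    unfolding crd_def by (rule sum.cong) (use assms nth_eq_iff_index_eq in auto)
  also have "\<dots> = v $ p" using assms by simp
  finally show ?thesis .
qed

lemma crd_notin: "j \<notin> set G \<Longrightarrow> crd G v j = 0"
  unfolding crd_def by (rule sum.neutral) auto

lemma crd_ext:
  assumes "distinct G" "v \<in> carrier_vec (length G)" "w \<in> carrier_vec (length G)"
    "\<And>j. j \<in> set G \<Longrightarrow> crd G v j = crd G w j"
  shows "v = w"
proof (rule eq_vecI)
  fix p assume "p < dim_vec w"
  then have p: "p < length G" using assms by simp
  have "v $ p = crd G v (G ! p)" using crd_nth[OF assms(1) p, of v] by simp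
  also have "\<dots> = crd G w (G ! p)" using assms(4) p by simp
  also have "\<dots> = w $ p" using crd_nth[OF assms(1) p, of w] by simp
  finally show "v $ p = w $ p" .
qed (use assms in simp)

lemma crd_add: "v \<in> carrier_vec (length G) \<Longrightarrow> w \<in> carrier_vec (length G) \<Longrightarrow>
   crd G (v + w) j = crd G v j + crd G w j"
  unfolding crd_def by (auto simp: sum.distrib[symmetric] intro!: sum.cong)

lemma crd_minus: "v \<in> carrier_vec (length G) \<Longrightarrow> w \<in> carrier_vec (length G) \<Longrightarrow>
   crd G (v - w) j = crd G v j - crd G w j"
  unfolding crd_def by (auto simp: sum_subtractf[symmetric] intro!: sum.cong)

lemma crd_smult: "v \<in> carrier_vec (length G) \<Longrightarrow> crd G (c \<cdot>\<^sub>v v) j = c * crd G v j"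
  unfolding crd_def by (auto simp: sum_distrib_left intro!: sum.cong)

lemma crd_zero: "crd G (0\<^sub>v (length G)) j = 0"
  unfolding crd_def by (auto intro!: sum.neutral)

lemma Mcar: "rmap (free_rep gs :: ('j::order, 'k::field) rep) x y
   \<in> carrier_mat (length (gens_le gs y)) (length (gens_le gs x))"
  by simp

lemma M_index:
  assumes "r < length (gens_le gs y)" "v \<in> carrier_vec (length (gens_le gs x))"
  shows "(rmap (free_rep gs :: ('j::order, 'k::field) rep) x y *\<^sub>v v) $ r
     = crd (gens_le gs x) v (gens_le gs y ! r)"
  using assms unfolding crd_def
  by (auto simp: scalar_prod_def intro!: sum.cong)

lemma M_crd:
  assumes "x \<le> y" "v \<in> carrier_vec (length (gens_le gs x))"
  shows "crd (gens_le gs y) (rmap (free_rep gs :: ('j::order, 'k::field) rep) x y *\<^sub>v v) j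
     = crd (gens_le gs x) v j"
proof (cases "j \<in> set (gens_le gs y)")
  case True
  then obtain p where p: "p < length (gens_le gs y)" "gens_le gs y ! p = j"
    by (metis in_set_conv_nth)
  show ?thesis
    using crd_nth[OF gens_distinct p(1), of "rmap (free_rep gs :: ('j::order, 'k::field) rep) x y *\<^sub>v v"]
      M_index[OF p(1) assms(2)] p by simp
next
  case False
  then have "j \<notin> set (gens_le gs x)" using assms(1) by (auto simp: gens_set intro: order_trans)
  then show ?thesis using False by (simp add: crd_notin)
qed

lemma M_surj:
  assumes "x \<le> y" "set (gens_le gs x) = set (gens_le gs y)"
    "w \<in> carrier_vec (length (gens_le gs y))"
  shows "\<exists>v \<in> carrier_vec (length (gens_le gs x)).
     rmap (free_rep gs :: ('j::order, 'k::field) rep) x y *\<^sub>v v = w"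
proof (intro bexI)
  let ?v = "vec (length (gens_le gs x)) (\<lambda>c. crd (gens_le gs y) w (gens_le gs x ! c)) :: 'k vec"
  show "?v \<in> carrier_vec (length (gens_le gs x))" by simp
  have car: "rmap (free_rep gs :: ('j::order, 'k::field) rep) x y *\<^sub>v ?v \<in> carrier_vec (length (gens_le gs y))"
    by (rule mult_mat_vec_carrier[OF Mcar]) simp
  show "rmap (free_rep gs :: ('j::order, 'k::field) rep) x y *\<^sub>v ?v = w"
  proof (rule crd_ext[OF gens_distinct])
    fix j assume j: "j \<in> set (gens_le gs y)"
    then obtain p where p: "p < length (gens_le gs x)" "gens_le gs x ! p = j"
      using assms(2) by (metis in_set_conv_nth)
    have "crd (gens_le gs y) (rmap (free_rep gs :: ('j::order, 'k::field) rep) x y *\<^sub>v ?v) j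
        = crd (gens_le gs x) ?v j" by (rule M_crd[OF assms(1)]) simp
    also have "\<dots> = crd (gens_le gs y) w j"
      using crd_nth[OF gens_distinct p(1), of ?v] p by simp
    finally show "crd (gens_le gs y) (rmap (free_rep gs :: ('j::order, 'k::field) rep) x y *\<^sub>v ?v) j
        = crd (gens_le gs y) w j" .
    qed (use car assms(3) in fast)+
qed

lemma M_inj:
  assumes "x \<le> y" "v \<in> carrier_vec (length (gens_le gs x))"
    "rmap (free_rep gs :: ('j::order, 'k::field) rep) x y *\<^sub>v v = 0\<^sub>v (length (gens_le gs y))"
  shows "v = 0\<^sub>v (length (gens_le gs x))"
proof (rule crd_ext[OF gens_distinct])
  fix j
  have "crd (gens_le gs x) v j = crd (gens_le gs y) (rmap (free_rep gs :: ('j::order, 'k::field) rep) x y *\<^sub>v v) j"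
    using M_crd[OF assms(1,2)] by simp
  then show "crd (gens_le gs x) v j = crd (gens_le gs x) (0\<^sub>v (length (gens_le gs x))) j"
    using assms(3) by (simp add: crd_zero)
qed (use assms in auto)


declare rmap_free[simp del]

lemma mat_vec_zero: "A \<in> carrier_mat n m \<Longrightarrow> A *\<^sub>v 0\<^sub>v m = (0\<^sub>v n :: 'k::field vec)"
  by (rule eq_vecI) (auto simp: scalar_prod_def)

lemma smult_vec_zero: "c \<cdot>\<^sub>v 0\<^sub>v n = (0\<^sub>v n :: 'k::field vec)"
  by (rule eq_vecI) auto

lemma natv:
  assumes "nat_trans (free_rep gP) (free_rep gQ :: ('j::order, 'k::field) rep) f"
    "x \<le> y" "v \<in> carrier_vec (length (gens_le gP x))"
  shows "rmap (free_rep gQ :: ('j, 'k) rep) x y *\<^sub>v (f x *\<^sub>v v)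
       = f y *\<^sub>v (rmap (free_rep gP :: ('j, 'k) rep) x y *\<^sub>v v)"
proof -
  have fc: "\<And>x. f x \<in> carrier_mat (length (gens_le gQ x)) (length (gens_le gP x))"
    and comm: "rmap (free_rep gQ :: ('j, 'k) rep) x y * f x = f y * rmap (free_rep gP :: ('j, 'k) rep) x y"
    using assms(1,2) by (auto simp: nat_trans_def)
  have "rmap (free_rep gQ :: ('j, 'k) rep) x y *\<^sub>v (f x *\<^sub>v v)
      = (rmap (free_rep gQ :: ('j, 'k) rep) x y * f x) *\<^sub>v v"
    by (rule assoc_mult_mat_vec[symmetric, OF Mcar fc assms(3)])
  also have "\<dots> = (f y * rmap (free_rep gP :: ('j, 'k) rep) x y) *\<^sub>v v" using comm by simp
  also have "\<dots> = f y *\<^sub>v (rmap (free_rep gP :: ('j, 'k) rep) x y *\<^sub>v v)"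
    by (rule assoc_mult_mat_vec[OF fc Mcar assms(3)])
  finally show ?thesis .
qed

lemma key:
  fixes gP gQ gR :: "'j::semilattice_sup list" and f g :: "'j \<Rightarrow> 'k::field mat"
  assumes nf: "nat_trans (free_rep gP) (free_rep gQ :: ('j, 'k) rep) f"
    and ng: "nat_trans (free_rep gQ) (free_rep gR :: ('j, 'k) rep) g"
    and ex: "\<forall>x. im_at (free_rep gP :: ('j, 'k) rep) f x = ker_at (free_rep gQ) (free_rep gR :: ('j, 'k) rep) g x"
    and sf: "superfluous_ker (free_rep gP) (free_rep gQ :: ('j, 'k) rep) f"
    and i: "i < length gP"
  shows "gP ! i \<in> join_closure (set gQ)"
proof (rule ccontr)
  assume nj: "gP ! i \<notin> join_closure (set gQ)"
  define a where "a = gP ! i"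
  have iin: "i \<in> set (gens_le gP a)" using i by (simp add: gens_set a_def)
  obtain pi where pi: "pi < length (gens_le gP a)" "gens_le gP a ! pi = i"
    using iin by (metis in_set_conv_nth)
  define e :: "'k vec" where "e = unit_vec (length (gens_le gP a)) pi"
  have ecar: "e \<in> carrier_vec (length (gens_le gP a))" by (simp add: e_def)
  have e1: "crd (gens_le gP a) e i = 1"
    using crd_nth[OF gens_distinct pi(1), of e] pi by (simp add: e_def)
  have fcar: "\<And>x. f x \<in> carrier_mat (length (gens_le gQ x)) (length (gens_le gP x))"
    using nf by (simp add: nat_trans_def)
  have gcar: "\<And>x. g x \<in> carrier_mat (length (gens_le gR x)) (length (gens_le gQ x))"
    using ng by (simp add: nat_trans_def)
  have hu: "\<exists>u \<in> carrier_vec (length (gens_le gP a)). crd (gens_le gP a) u i = 0 \<and>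
      f a *\<^sub>v (e - u) = 0\<^sub>v (length (gens_le gQ a))"
  proof (cases "{b \<in> set gQ. b \<le> a} = {}")
    case True
    then have "set (gens_le gQ a) = {}" by (auto simp: gens_set)
    then have l0: "length (gens_le gQ a) = 0" by simp
    show ?thesis
    proof (intro bexI conjI)
      show "0\<^sub>v (length (gens_le gP a)) \<in> carrier_vec (length (gens_le gP a))" by simp
      show "crd (gens_le gP a) (0\<^sub>v (length (gens_le gP a)) :: 'k vec) i = 0" by (rule crd_zero)
      show "f a *\<^sub>v (e - 0\<^sub>v (length (gens_le gP a))) = 0\<^sub>v (length (gens_le gQ a))"
        by (rule eq_vecI) (use fcar[of a] l0 in auto)
    qed
  next
    case False
    define S where "S = {b \<in> set gQ. b \<le> a}"
    define y where "y = Sup_fin S"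
    have Sfin: "finite S" by (simp add: S_def)
    have Sne: "S \<noteq> {}" using False S_def by simp
    have ya: "y \<le> a" unfolding y_def by (rule Sup_fin.boundedI[OF Sfin Sne]) (auto simp: S_def)
    have yna: "y \<noteq> a"
    proof
      assume "y = a"
      moreover have "S \<subseteq> set gQ" by (auto simp: S_def)
      ultimately have "a \<in> join_closure (set gQ)" unfolding join_closure_def y_def
        using Sne by blast
      then show False using nj a_def by simp
    qed
    have setQ: "set (gens_le gQ y) = set (gens_le gQ a)"
    proof
      show "set (gens_le gQ y) \<subseteq> set (gens_le gQ a)" using ya by (auto simp: gens_set intro: order_trans)
      show "set (gens_le gQ a) \<subseteq> set (gens_le gQ y)"
      proof
        fix j assume "j \<in> set (gens_le gQ a)"
        then have "gQ ! j \<in> S" "j < length gQ" by (auto simp: gens_set S_def)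
        then show "j \<in> set (gens_le gQ y)" using Sup_fin.coboundedI[OF Sfin] by (auto simp: gens_set y_def)
      qed
    qed
    have iy: "i \<notin> set (gens_le gP y)" using ya yna by (auto simp: gens_set a_def)
    define w where "w = f a *\<^sub>v e"
    have wcar: "w \<in> carrier_vec (length (gens_le gQ a))"
      unfolding w_def by (rule mult_mat_vec_carrier[OF fcar ecar])
    have wim: "w \<in> im_at (free_rep gP :: ('j, 'k) rep) f a" using ecar by (auto simp: im_at_def w_def)
    then have wker: "g a *\<^sub>v w = 0\<^sub>v (length (gens_le gR a))" using ex by (simp add: ker_at_def)
    obtain w' where w': "w' \<in> carrier_vec (length (gens_le gQ y))"
        "rmap (free_rep gQ :: ('j, 'k) rep) y a *\<^sub>v w' = w"
      using M_surj[OF ya setQ wcar] by blast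
    have gw'car: "g y *\<^sub>v w' \<in> carrier_vec (length (gens_le gR y))"
      by (rule mult_mat_vec_carrier[OF gcar w'(1)])
    have "rmap (free_rep gR :: ('j, 'k) rep) y a *\<^sub>v (g y *\<^sub>v w')
        = g a *\<^sub>v (rmap (free_rep gQ :: ('j, 'k) rep) y a *\<^sub>v w')" by (rule natv[OF ng ya w'(1)])
    also have "\<dots> = 0\<^sub>v (length (gens_le gR a))" using w' wker by simp
    finally have "g y *\<^sub>v w' = 0\<^sub>v (length (gens_le gR y))" by (rule M_inj[OF ya gw'car])
    then have "w' \<in> ker_at (free_rep gQ) (free_rep gR :: ('j, 'k) rep) g y" using w' by (simp add: ker_at_def)
    then have "w' \<in> im_at (free_rep gP :: ('j, 'k) rep) f y" using ex by simp
    then obtain u' where u': "u' \<in> carrier_vec (length (gens_le gP y))" "w' = f y *\<^sub>v u'"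
      by (auto simp: im_at_def)
    define u where "u = rmap (free_rep gP :: ('j, 'k) rep) y a *\<^sub>v u'"
    have ucar: "u \<in> carrier_vec (length (gens_le gP a))"
      unfolding u_def by (rule mult_mat_vec_carrier[OF Mcar u'(1)])
    have u0: "crd (gens_le gP a) u i = 0" using M_crd[OF ya u'(1)] crd_notin[OF iy] u_def by simp
    have "f a *\<^sub>v u = rmap (free_rep gQ :: ('j, 'k) rep) y a *\<^sub>v (f y *\<^sub>v u')"
      using natv[OF nf ya u'(1)] u_def by simp
    also have "\<dots> = w" using u' w' by simp
    finally have fu: "f a *\<^sub>v u = w" .
    show ?thesis
    proof (intro bexI conjI)
      have "f a *\<^sub>v (e - u) = f a *\<^sub>v e - f a *\<^sub>v u"
        by (rule mult_minus_distrib_mat_vec[OF fcar ecar ucar])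
      also have "\<dots> = 0\<^sub>v (length (gens_le gQ a))" using fu w_def minus_cancel_vec[OF wcar] by simp
      finally show "f a *\<^sub>v (e - u) = 0\<^sub>v (length (gens_le gQ a))" .
    qed (use ucar u0 in auto)
  qed
  then obtain u where ucar: "u \<in> carrier_vec (length (gens_le gP a))"
    and u0: "crd (gens_le gP a) u i = 0" and ku: "f a *\<^sub>v (e - u) = 0\<^sub>v (length (gens_le gQ a))"
    by blast
  define k where "k = e - u"
  have kcar: "k \<in> carrier_vec (length (gens_le gP a))" using ecar ucar by (simp add: k_def)
  have kcrd: "crd (gens_le gP a) k i = 1" using crd_minus[OF ecar ucar] e1 u0 by (simp add: k_def)
  define N :: "'j \<Rightarrow> 'k vec set" where "N x = {v \<in> carrier_vec (length (gens_le gP x)). crd (gens_le gP x) v i = 0}" for x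
  have subN: "subrep (free_rep gP :: ('j, 'k) rep) N"
    unfolding subrep_def
  proof (intro conjI allI impI ballI)
    fix x
    show "N x \<subseteq> carrier_vec (rdim (free_rep gP :: ('j, 'k) rep) x)" by (auto simp: N_def)
    show "0\<^sub>v (rdim (free_rep gP :: ('j, 'k) rep) x) \<in> N x" by (simp add: N_def crd_zero)
    show "\<And>u w. u \<in> N x \<Longrightarrow> w \<in> N x \<Longrightarrow> u + w \<in> N x" by (auto simp: N_def crd_add)
    show "\<And>c u. u \<in> N x \<Longrightarrow> c \<cdot>\<^sub>v u \<in> N x" by (auto simp: N_def crd_smult)
  next
    fix x y v assume xy: "x \<le> y" and v: "v \<in> N x"
    then show "rmap (free_rep gP :: ('j, 'k) rep) x y *\<^sub>v v \<in> N y"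
      using v M_crd[OF xy, of v gP i] mult_mat_vec_carrier[OF Mcar, of v gP x y] unfolding N_def by auto
  qed
  have cov: "\<forall>x. {u + w |u w. u \<in> N x \<and> w \<in> ker_at (free_rep gP) (free_rep gQ :: ('j, 'k) rep) f x}
      = carrier_vec (rdim (free_rep gP :: ('j, 'k) rep) x)"
  proof
    fix x
    show "{u + w |u w. u \<in> N x \<and> w \<in> ker_at (free_rep gP) (free_rep gQ :: ('j, 'k) rep) f x}
      = carrier_vec (rdim (free_rep gP :: ('j, 'k) rep) x)"
    proof
      show "{u + w |u w. u \<in> N x \<and> w \<in> ker_at (free_rep gP) (free_rep gQ :: ('j, 'k) rep) f x}
        \<subseteq> carrier_vec (rdim (free_rep gP :: ('j, 'k) rep) x)"
        by (auto simp: N_def ker_at_def)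
      show "carrier_vec (rdim (free_rep gP :: ('j, 'k) rep) x) \<subseteq>
        {u + w |u w. u \<in> N x \<and> w \<in> ker_at (free_rep gP) (free_rep gQ :: ('j, 'k) rep) f x}"
      proof
        fix v :: "'k vec" assume "v \<in> carrier_vec (rdim (free_rep gP :: ('j, 'k) rep) x)"
        then have v: "v \<in> carrier_vec (length (gens_le gP x))" by simp
        show "v \<in> {u + w |u w. u \<in> N x \<and> w \<in> ker_at (free_rep gP) (free_rep gQ :: ('j, 'k) rep) f x}"
        proof (cases "a \<le> x")
          case True
          define c where "c = crd (gens_le gP x) v i"
          define kx where "kx = rmap (free_rep gP :: ('j, 'k) rep) a x *\<^sub>v k"
          have kxcar: "kx \<in> carrier_vec (length (gens_le gP x))"
            unfolding kx_def by (rule mult_mat_vec_carrier[OF Mcar kcar])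
          have kxcrd: "crd (gens_le gP x) kx i = 1" using M_crd[OF True kcar] kcrd kx_def by simp
          have "f x *\<^sub>v kx = rmap (free_rep gQ :: ('j, 'k) rep) a x *\<^sub>v (f a *\<^sub>v k)"
            using natv[OF nf True kcar] kx_def by simp
          also have "\<dots> = 0\<^sub>v (length (gens_le gQ x))" using ku k_def mat_vec_zero[OF Mcar] by simp
          finally have kxker: "f x *\<^sub>v kx = 0\<^sub>v (length (gens_le gQ x))" .
          have ckcar: "c \<cdot>\<^sub>v kx \<in> carrier_vec (length (gens_le gP x))" using kxcar by simp
          have m1: "v - c \<cdot>\<^sub>v kx \<in> N x"
            using crd_minus[OF v ckcar] crd_smult[OF kxcar] kxcrd v ckcar by (simp add: N_def c_def)
          have "f x *\<^sub>v (c \<cdot>\<^sub>v kx) = c \<cdot>\<^sub>v (f x *\<^sub>v kx)" by (rule mult_mat_vec[OF fcar kxcar])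
          then have m2: "c \<cdot>\<^sub>v kx \<in> ker_at (free_rep gP) (free_rep gQ :: ('j, 'k) rep) f x"
            using kxker ckcar by (simp add: ker_at_def smult_vec_zero)
          have "v = (v - c \<cdot>\<^sub>v kx) + c \<cdot>\<^sub>v kx"
          proof (rule crd_ext[OF gens_distinct v])
            show "v - c \<cdot>\<^sub>v kx + c \<cdot>\<^sub>v kx \<in> carrier_vec (length (gens_le gP x))" using v ckcar by simp
            fix j
            show "crd (gens_le gP x) v j = crd (gens_le gP x) (v - c \<cdot>\<^sub>v kx + c \<cdot>\<^sub>v kx) j"
              using crd_add[of "v - c \<cdot>\<^sub>v kx" "gens_le gP x" "c \<cdot>\<^sub>v kx" j] crd_minus[OF v ckcar, of j] v ckcar
              by simp
          qed
          then show ?thesis using m1 m2 by blast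
        next
          case False
          then have "i \<notin> set (gens_le gP x)" by (auto simp: gens_set a_def)
          then have m1: "v \<in> N x" using v by (simp add: N_def crd_notin)
          have m2: "0\<^sub>v (length (gens_le gP x)) \<in> ker_at (free_rep gP) (free_rep gQ :: ('j, 'k) rep) f x"
            using mat_vec_zero[OF fcar] by (simp add: ker_at_def)
          have "v = v + 0\<^sub>v (length (gens_le gP x))" using v by simp
          then show ?thesis using m1 m2 by blast
        qed
      qed
    qed
  qed
  have "N a = carrier_vec (rdim (free_rep gP :: ('j, 'k) rep) a)"
    using sf subN cov unfolding superfluous_ker_def by blast
  then have "e \<in> N a" using ecar by simp
  then show False using e1 by (simp add: N_def)
qed


lemma jc_mono:
  fixes S S' :: "'j::{finite, semilattice_sup} set"
  assumes "S' \<subseteq> join_closure S"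
  shows "join_closure S' \<subseteq> join_closure S"
proof
  fix z assume "z \<in> join_closure S'"
  then obtain T where T: "z = Sup_fin T" "T \<noteq> {}" "T \<subseteq> S'" by (auto simp: join_closure_def)
  have "\<forall>t\<in>T. \<exists>U. t = Sup_fin U \<and> U \<noteq> {} \<and> U \<subseteq> S"
    using T(3) assms by (auto simp: join_closure_def)
  then obtain U where U: "\<And>t. t \<in> T \<Longrightarrow> t = Sup_fin (U t) \<and> U t \<noteq> {} \<and> U t \<subseteq> S" by metis
  define V where "V = (\<Union>t\<in>T. U t)"
  have Vne: "V \<noteq> {}" using T(2) U by (auto simp: V_def)
  have VS: "V \<subseteq> S" using U by (auto simp: V_def)
  have "Sup_fin T = Sup_fin V"
  proof (rule antisym)
    show "Sup_fin T \<le> Sup_fin V"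
    proof (rule Sup_fin.boundedI)
      fix t assume t: "t \<in> T"
      have "Sup_fin (U t) \<le> Sup_fin V"
        by (rule Sup_fin.boundedI) (use U[OF t] t in \<open>auto simp: V_def intro: Sup_fin.coboundedI\<close>)
      then show "t \<le> Sup_fin V" using U[OF t] by simp
    qed (use T(2) in auto)
    show "Sup_fin V \<le> Sup_fin T"
    proof (rule Sup_fin.boundedI)
      fix s assume "s \<in> V"
      then obtain t where t: "t \<in> T" "s \<in> U t" by (auto simp: V_def)
      have "s \<le> Sup_fin (U t)" by (rule Sup_fin.coboundedI) (use t in auto)
      also have "\<dots> = t" using U[OF t(1)] by simp
      also have "t \<le> Sup_fin T" by (rule Sup_fin.coboundedI) (use t in auto)
      finally show "s \<le> Sup_fin T" .
    qed (use Vne in auto)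
  qed
  then show "z \<in> join_closure S" using T(1) Vne VS by (auto simp: join_closure_def)
qed

lemma supp_betti: "supp (betti gs d) = set (gs d)"
  by (auto simp: supp_def betti_def)

theorem corollary4p2:
  fixes F :: "('j::{finite, semilattice_sup}, 'k::field) rep"
    and gs :: "nat \<Rightarrow> 'j list"
    and eps :: "'j \<Rightarrow> 'k mat"
    and dd :: "nat \<Rightarrow> 'j \<Rightarrow> 'k mat"
  assumes "is_rep F"
    and "min_proj_res F gs eps dd"
    and "\<exists>m. \<forall>a \<in> supp (betti gs 0). m \<le> a"
    and "d \<ge> 1"
  shows "join_closure (supp (betti gs (Suc d))) \<subseteq> join_closure (supp (betti gs d))"
proof -
  obtain d' where d: "d = Suc d'" using assms(4) by (cases d) auto
  have R: "min_proj_res F gs eps dd" by fact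
  have nf: "nat_trans (free_rep (gs (Suc (Suc d')))) (free_rep (gs (Suc d')) :: ('j, 'k) rep) (dd (Suc d'))"
    using R by (simp add: min_proj_res_def)
  have ng: "nat_trans (free_rep (gs (Suc d'))) (free_rep (gs d') :: ('j, 'k) rep) (dd d')"
    using R by (simp add: min_proj_res_def)
  have ex: "\<forall>x. im_at (free_rep (gs (Suc (Suc d'))) :: ('j, 'k) rep) (dd (Suc d')) x
      = ker_at (free_rep (gs (Suc d'))) (free_rep (gs d') :: ('j, 'k) rep) (dd d') x"
    using R unfolding min_proj_res_def by blast
  have sf: "superfluous_ker (free_rep (gs (Suc (Suc d')))) (free_rep (gs (Suc d')) :: ('j, 'k) rep) (dd (Suc d'))"
    using R unfolding min_proj_res_def by blast
  have "set (gs (Suc d)) \<subseteq> join_closure (set (gs d))"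
  proof
    fix b assume "b \<in> set (gs (Suc d))"
    then obtain i where i: "i < length (gs (Suc d))" "b = gs (Suc d) ! i" by (metis in_set_conv_nth)
    show "b \<in> join_closure (set (gs d))"
      using key[OF nf ng ex sf, of i] i d by simp
  qed
  then show ?thesis unfolding supp_betti by (rule jc_mono)
qed

end
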